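(* A rule defined on $\mathcal{E}_{\mathcal{SP}}$ satisfies own-peak-onliness, efficiency, peak responsiveness, and not obvious manipulability (NOM) if and only if it is a peak responsive simple rule.
   Context: Let $N=\{1,\dots,n\}$ be a finite set of agents. A preference $R_i$ is a continuous complete preorder on $\mathbb{R}_+\cup\{\infty\}$ ($P_i$ strict); its peak $p(R_i)$ is the set of maximal elements. $R_i$ is single-peaked if $p(R_i)$ is a singleton (identified with its element) and for $x,x'\in\mathbb{R}_+$, $xP_ix'$ whenever $x'<x\le p(R_i)$ or $p(R_i)\le x<x'$; $\mathcal{SP}$ is the set of these. An economy is $(R,\Omega)$, $R\in\mathcal{SP}^n$, $\Omega>0$; $\mathcal{E}_{\mathcal{SP}}$ is the set of economies; a rule is a map $\varphi:\mathcal{E}_{\mathcal{SP}}\to\mathbb{R}^n_+$ with $\sum_j\varphi_j(R,\Omega)=\Omega$. Properties: Efficiency: no $x\in\mathbb{R}^n_+$ with $\sum_jx_j=\Omega$ has $x_iR_i\varphi_i(R,\Omega)$ for all $i$ and $x_iP_i\varphi_i(R,\Omega)$ for some $i$. Own-peak-onliness: $p(R_i')=p(R_i)$ implies $\varphi_i(R,\Omega)=\varphi_i(R_i',R_{-i},\Omega)$. Peak responsiveness: for $i\ne j$, $p(R_i)\le p(R_j)$ implies $\varphi_i(R,\Omega)\le\varphi_j(R,\Omega)$. Option set $O^\varphi(R_i,\Omega)=\{\varphi_i(R_i,R_{-i},\Omega):R_{-i}\in\mathcal{SP}^{n-1}\}$; $R_i'$ is a manipulation at $(R_i,\Omega)$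 if $\varphi_i(R_i',R_{-i},\Omega)P_i\varphi_i(R_i,R_{-i},\Omega)$ for some $R_{-i}$, an obvious manipulation if moreover each $x'\in O^\varphi(R_i',\Omega)$ satisfies $x'P_ix$ for some $x\in O^\varphi(R_i,\Omega)$; NOM means no obvious manipulation exists. Simple rules: $z(R,\Omega)=\sum_jp(R_j)-\Omega$; agent $i$ is simple if ($z\ge0$ and $p(R_i)<\Omega/n$) or ($z\le0$ and $p(R_i)>\Omega/n$); $N^+$ is the set of simple agents, $N^-=N\setminus N^+$; $E(R,\Omega)=\left|\Omega-\left(\sum_{j\in N^+}p(R_j)+|N^-|\frac{\Omega}{n}\right)\right|$. An own-peak-only rule is simple if $\varphi_i=p(R_i)$ for $i\in N^+$, $\varphi_i=\frac{\Omega}{n}+\nu_i$ for $i\in N^-$ when $z\ge0$, $\varphi_i=\frac{\Omega}{n}-\nu_i$ for $i\in N^-$ when $z\le0$, with $0\le\nu_i\le|p(R_i)-\frac{\Omega}{n}|$ and $\sum_{j\in N^-}\nu_j=E(R,\Omega)$. *)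

theory Defs
  imports "HOL-Analysis.Analysis"
begin

text \<open>Consumption space \<open>\<real>\<^sub>+ \<union> {\<infinity>}\<close>, modelled as the nonnegative extended reals.
  A preference is a binary relation on extended reals (weak preference \<open>R x y\<close>:
  x is at least as good as y), required to relate only points of this space.
  Agents are the elements of a finite type \<open>'a\<close>, so \<open>n = CARD('a)\<close>.\<close>

type_synonym pref = "ereal \<Rightarrow> ereal \<Rightarrow> bool"

definition cspace :: "ereal set" where
  "cspace = {x. 0 \<le> x}"

definition strict :: "pref \<Rightarrow> ereal \<Rightarrow> ereal \<Rightarrow> bool" where
  "strict R x y \<longleftrightarrow> R x y \<and> \<not> R y x"

definition cont_complete_preorder :: "pref \<Rightarrow> bool" where
  "cont_complete_preorder R \<longleftrightarrow>
     (\<forall>x y. R x y \<longrightarrow> x \<in> cspace \<and> y \<in> cspace) \<and>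
     (\<forall>x\<in>cspace. \<forall>y\<in>cspace. R x y \<or> R y x) \<and>
     (\<forall>x y z. R x y \<longrightarrow> R y z \<longrightarrow> R x z) \<and>
     (\<forall>y\<in>cspace. closedin (top_of_set cspace) {x\<in>cspace. R x y} \<and>
                 closedin (top_of_set cspace) {x\<in>cspace. R y x})"

definition peaks :: "pref \<Rightarrow> ereal set" where
  "peaks R = {x\<in>cspace. \<forall>y\<in>cspace. R x y}"

definition peak :: "pref \<Rightarrow> ereal" where
  "peak R = (THE p. p \<in> peaks R)"

definition single_peaked :: "pref \<Rightarrow> bool" where
  "single_peaked R \<longleftrightarrow> cont_complete_preorder R \<and> (\<exists>p. peaks R = {p}) \<and>
     (\<forall>x x' :: real. 0 \<le> x \<and> 0 \<le> x' \<longrightarrow>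
        ((x' < x \<and> ereal x \<le> peak R) \<or> (peak R \<le> ereal x \<and> x < x')) \<longrightarrow>
        strict R (ereal x) (ereal x'))"

definition SP :: "pref set" where
  "SP = {R. single_peaked R}"

definition economy :: "('a \<Rightarrow> pref) \<Rightarrow> real \<Rightarrow> bool" where
  "economy R \<Omega> \<longleftrightarrow> (\<forall>i. R i \<in> SP) \<and> 0 < \<Omega>"

type_synonym 'a rule = "('a \<Rightarrow> pref) \<Rightarrow> real \<Rightarrow> 'a \<Rightarrow> real"

definition is_rule :: "'a::finite rule \<Rightarrow> bool" where
  "is_rule \<phi> \<longleftrightarrow> (\<forall>R \<Omega>. economy R \<Omega> \<longrightarrow>
      (\<forall>i. 0 \<le> \<phi> R \<Omega> i) \<and> (\<Sum>j\<in>UNIV. \<phi> R \<Omega> j) = \<Omega>)"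

definition efficient :: "'a::finite rule \<Rightarrow> bool" where
  "efficient \<phi> \<longleftrightarrow> (\<forall>R \<Omega>. economy R \<Omega> \<longrightarrow>
      \<not> (\<exists>x :: 'a \<Rightarrow> real. (\<forall>i. 0 \<le> x i) \<and> (\<Sum>j\<in>UNIV. x j) = \<Omega> \<and>
           (\<forall>i. R i (ereal (x i)) (ereal (\<phi> R \<Omega> i))) \<and>
           (\<exists>i. strict (R i) (ereal (x i)) (ereal (\<phi> R \<Omega> i)))))"

definition own_peak_only :: "'a::finite rule \<Rightarrow> bool" where
  "own_peak_only \<phi> \<longleftrightarrow> (\<forall>R \<Omega> i R'. economy R \<Omega> \<longrightarrow> R' \<in> SP \<longrightarrow>
      peak R' = peak (R i) \<longrightarrow> \<phi> R \<Omega> i = \<phi> (R(i := R')) \<Omega> i)"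

definition peak_responsive :: "'a::finite rule \<Rightarrow> bool" where
  "peak_responsive \<phi> \<longleftrightarrow> (\<forall>R \<Omega> i j. economy R \<Omega> \<longrightarrow> i \<noteq> j \<longrightarrow>
      peak (R i) \<le> peak (R j) \<longrightarrow> \<phi> R \<Omega> i \<le> \<phi> R \<Omega> j)"

definition option_set :: "'a::finite rule \<Rightarrow> 'a \<Rightarrow> pref \<Rightarrow> real \<Rightarrow> real set" where
  "option_set \<phi> i Ri \<Omega> = {\<phi> (R(i := Ri)) \<Omega> i | R. \<forall>j. R j \<in> SP}"

definition manipulation :: "'a::finite rule \<Rightarrow> 'a \<Rightarrow> pref \<Rightarrow> pref \<Rightarrow> real \<Rightarrow> bool" where
  "manipulation \<phi> i Ri Ri' \<Omega> \<longleftrightarrow> (\<exists>R. (\<forall>j. R j \<in> SP) \<and>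
      strict Ri (ereal (\<phi> (R(i := Ri')) \<Omega> i)) (ereal (\<phi> (R(i := Ri)) \<Omega> i)))"

definition obvious_manipulation :: "'a::finite rule \<Rightarrow> 'a \<Rightarrow> pref \<Rightarrow> pref \<Rightarrow> real \<Rightarrow> bool" where
  "obvious_manipulation \<phi> i Ri Ri' \<Omega> \<longleftrightarrow> manipulation \<phi> i Ri Ri' \<Omega> \<and>
      (\<forall>x'\<in>option_set \<phi> i Ri' \<Omega>. \<exists>x\<in>option_set \<phi> i Ri \<Omega>. strict Ri (ereal x') (ereal x))"

definition NOM :: "'a::finite rule \<Rightarrow> bool" where
  "NOM \<phi> \<longleftrightarrow> (\<forall>i Ri Ri' \<Omega>. Ri \<in> SP \<longrightarrow> Ri' \<in> SP \<longrightarrow> 0 < \<Omega> \<longrightarrow>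
      \<not> obvious_manipulation \<phi> i Ri Ri' \<Omega>)"

definition excess :: "('a::finite \<Rightarrow> pref) \<Rightarrow> real \<Rightarrow> ereal" where
  "excess R \<Omega> = (\<Sum>j\<in>UNIV. peak (R j)) - ereal \<Omega>"

definition simple_agent :: "('a::finite \<Rightarrow> pref) \<Rightarrow> real \<Rightarrow> 'a \<Rightarrow> bool" where
  "simple_agent R \<Omega> i \<longleftrightarrow>
     (excess R \<Omega> \<ge> 0 \<and> peak (R i) < ereal (\<Omega> / real CARD('a))) \<or>
     (excess R \<Omega> \<le> 0 \<and> peak (R i) > ereal (\<Omega> / real CARD('a)))"

definition E_val :: "('a::finite \<Rightarrow> pref) \<Rightarrow> real \<Rightarrow> ereal" where
  "E_val R \<Omega> = \<bar>ereal \<Omega> - ((\<Sum>j\<in>{j. simple_agent R \<Omega> j}. peak (R j))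
        + ereal (real (card {j. \<not> simple_agent R \<Omega> j}) * (\<Omega> / real CARD('a))))\<bar>"

definition simple_rule :: "'a::finite rule \<Rightarrow> bool" where
  "simple_rule \<phi> \<longleftrightarrow> own_peak_only \<phi> \<and> (\<forall>R \<Omega>. economy R \<Omega> \<longrightarrow>
     (\<exists>\<nu> :: 'a \<Rightarrow> real.
        (\<forall>i. simple_agent R \<Omega> i \<longrightarrow> ereal (\<phi> R \<Omega> i) = peak (R i)) \<and>
        (excess R \<Omega> \<ge> 0 \<longrightarrow> (\<forall>i. \<not> simple_agent R \<Omega> i \<longrightarrow>
             \<phi> R \<Omega> i = \<Omega> / real CARD('a) + \<nu> i)) \<and>
        (excess R \<Omega> \<le> 0 \<longrightarrow> (\<forall>i. \<not> simple_agent R \<Omega> i \<longrightarrow>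
             \<phi> R \<Omega> i = \<Omega> / real CARD('a) - \<nu> i)) \<and>
        (\<forall>i. \<not> simple_agent R \<Omega> i \<longrightarrow>
             0 \<le> \<nu> i \<and> ereal (\<nu> i) \<le> \<bar>peak (R i) - ereal (\<Omega> / real CARD('a))\<bar>) \<and>
        ereal (\<Sum>j\<in>{j. \<not> simple_agent R \<Omega> j}. \<nu> j) = E_val R \<Omega>))"

end

theory Submission
  imports Defs
begin

definition pu :: "(ereal \<Rightarrow> ereal) \<Rightarrow> pref" where
  "pu u = (\<lambda>x y. x \<in> cspace \<and> y \<in> cspace \<and> u y \<le> u x)"

lemma pu_strict: "strict (pu u) x y \<longleftrightarrow> x \<in> cspace \<and> y \<in> cspace \<and> u y < u x"
  unfolding strict_def pu_def by auto

lemma pu_ccp: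
  assumes "continuous_on cspace u"
  shows "cont_complete_preorder (pu u)"
proof -
  have c1: "closedin (top_of_set cspace) {x\<in>cspace. u y \<le> u x}" for y
  proof -
    have "{x\<in>cspace. u y \<le> u x} = cspace \<inter> u -` {u y..}"
      by auto
    then show ?thesis
      using continuous_closedin_preimage[OF assms closed_atLeast] by auto
  qed
  have c2: "closedin (top_of_set cspace) {x\<in>cspace. u x \<le> u y}" for y
  proof -
    have "{x\<in>cspace. u x \<le> u y} = cspace \<inter> u -` {..u y}"
      by auto
    then show ?thesis
      using continuous_closedin_preimage[OF assms closed_atMost] by auto
  qed
  have e1: "y \<in> cspace \<Longrightarrow> {x\<in>cspace. pu u x y} = {x\<in>cspace. u y \<le> u x}" for y
    by (auto simp: pu_def)
  have e2: "y \<in> cspace \<Longrightarrow> {x\<in>cspace. pu u y x} = {x\<in>cspace. u x \<le> u y}" for y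
    by (auto simp: pu_def)
  show ?thesis unfolding cont_complete_preorder_def using c1 c2 e1 e2
    by (auto simp: pu_def)
qed

lemma pu_SP:
  assumes "continuous_on cspace u" "p \<in> cspace"
    and "\<And>x. x \<in> cspace \<Longrightarrow> x \<noteq> p \<Longrightarrow> u x < u p"
    and "\<And>x x'::real. 0 \<le> x' \<Longrightarrow> x' < x \<Longrightarrow> ereal x \<le> p \<Longrightarrow> u (ereal x') < u (ereal x)"
    and "\<And>x x'::real. 0 \<le> x \<Longrightarrow> x < x' \<Longrightarrow> p \<le> ereal x \<Longrightarrow> u (ereal x') < u (ereal x)"
  shows "pu u \<in> SP" "peak (pu u) = p"
proof -
  have pk: "peaks (pu u) = {p}"
  proof
    show "peaks (pu u) \<subseteq> {p}"
      using assms(2,3) unfolding peaks_def pu_def by (auto simp: not_le[symmetric])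
    show "{p} \<subseteq> peaks (pu u)"
      using assms(2,3) unfolding peaks_def pu_def by (auto intro: less_imp_le)
  qed
  then show pp: "peak (pu u) = p" unfolding peak_def by auto
  show "pu u \<in> SP" unfolding SP_def single_peaked_def
    using pu_ccp[OF assms(1)] pk pp assms(4,5)
    by (auto simp: pu_strict cspace_def)
qed

definition aff :: "real \<Rightarrow> real \<Rightarrow> ereal \<Rightarrow> ereal" where
  "aff a b x = ereal a * x + ereal b"

lemma aff_cont: "continuous_on A (aff a b)"
  unfolding continuous_on_def aff_def
proof
  fix x
  have "((\<lambda>y. ereal a * y) \<longlongrightarrow> ereal a * x) (at x within A)"
    by (intro tendsto_cmult_ereal tendsto_ident_at) auto
  then show "((\<lambda>y. ereal a * y + ereal b) \<longlongrightarrow> ereal a * x + ereal b) (at x within A)"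
    by (intro tendsto_add_ereal_general) auto
qed

definition tent :: "real \<Rightarrow> real \<Rightarrow> real \<Rightarrow> ereal \<Rightarrow> ereal" where
  "tent a b p x = min (aff a (- a * p) x) (aff (- b) (b * p) x)"

lemma tent_real: "a > 0 \<Longrightarrow> b > 0 \<Longrightarrow>
  tent a b p (ereal x) = ereal (if x \<le> p then a * (x - p) else b * (p - x))"
proof -
  assume a: "a > 0" "b > 0"
  have "x \<le> p \<longleftrightarrow> (a + b) * x \<le> (a + b) * p" using a by simp
  then show ?thesis unfolding tent_def aff_def
    by (auto simp: min_def algebra_simps)
qed

lemma tent_inf: "a > 0 \<Longrightarrow> b > 0 \<Longrightarrow> tent a b p \<infinity> = - \<infinity>"
  unfolding tent_def aff_def by (auto simp: min_def)

lemma tent_SP: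
  assumes "a > 0" "b > 0" "p \<ge> 0"
  shows "pu (tent a b p) \<in> SP" "peak (pu (tent a b p)) = ereal p"
proof -
  have cont: "continuous_on cspace (tent a b p)"
    unfolding tent_def by (intro continuous_on_min aff_cont)
  have t: "\<And>x. tent a b p (ereal x) = ereal (if x \<le> p then a * (x - p) else b * (p - x))"
    using tent_real[OF assms(1,2)] .
  have ti: "tent a b p \<infinity> = - \<infinity>" using tent_inf[OF assms(1,2)] .
  have A: "u x < u (ereal p)" if "x \<in> cspace" "x \<noteq> ereal p" and "u = tent a b p" for x u
  proof (cases x)
    case (real r)
    then show ?thesis using that assms
      by (auto simp: t mult_pos_neg)
  qed (use that ti t in \<open>auto simp: cspace_def\<close>)
  show "pu (tent a b p) \<in> SP" "peak (pu (tent a b p)) = ereal p"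
  proof -
    have L: "tent a b p (ereal x') < tent a b p (ereal x)" if "x' < x" "ereal x \<le> ereal p" for x x'
      using that assms by (simp add: t mult_strict_left_mono)
    have R: "tent a b p (ereal x') < tent a b p (ereal x)" if "x < x'" "ereal p \<le> ereal x" for x x'
    proof (cases "x = p")
      case True then show ?thesis using that assms by (simp add: t mult_pos_neg)
    next
      case False then show ?thesis using that assms by (simp add: t mult_strict_left_mono)
    qed
    have pc: "ereal p \<in> cspace" using assms by (simp add: cspace_def)
    show "pu (tent a b p) \<in> SP" "peak (pu (tent a b p)) = ereal p"
      using pu_SP[OF cont pc] A L R by auto
  qed
qed

lemma id_SP: "pu (\<lambda>x. x) \<in> SP" "peak (pu (\<lambda>x. x)) = \<infinity>"
  using pu_SP[OF continuous_on_id, of \<infinity>] by (auto simp: cspace_def)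

lemma SP_peak: "R \<in> SP \<Longrightarrow> peaks R = {peak R}"
  unfolding SP_def single_peaked_def peak_def by auto

lemma SP_peak_in: "R \<in> SP \<Longrightarrow> peak R \<in> cspace" "R \<in> SP \<Longrightarrow> y \<in> cspace \<Longrightarrow> R (peak R) y"
  using SP_peak[of R] unfolding peaks_def by auto

lemma SP_peak_nonneg: "R \<in> SP \<Longrightarrow> 0 \<le> peak R"
  using SP_peak_in(1) by (auto simp: cspace_def)

lemma SP_refl: "R \<in> SP \<Longrightarrow> 0 \<le> x \<Longrightarrow> R x x"
  unfolding SP_def single_peaked_def cont_complete_preorder_def cspace_def by auto

lemma SP_strict1: "R \<in> SP \<Longrightarrow> 0 \<le> x' \<Longrightarrow> x' < x \<Longrightarrow> ereal x \<le> peak R \<Longrightarrow> strict R (ereal x) (ereal x')"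
  unfolding SP_def single_peaked_def by auto

lemma SP_strict2: "R \<in> SP \<Longrightarrow> 0 \<le> x \<Longrightarrow> x < x' \<Longrightarrow> peak R \<le> ereal x \<Longrightarrow> strict R (ereal x) (ereal x')"
  unfolding SP_def single_peaked_def by auto

lemma strict_R: "strict R x y \<Longrightarrow> R x y" and strict_irrefl: "\<not> strict R x x"
  unfolding strict_def by auto

lemma rule_bounds:
  assumes "is_rule \<phi>" "economy R \<Omega>"
  shows "0 \<le> \<phi> R \<Omega> i" "\<phi> R \<Omega> i \<le> \<Omega>" "(\<Sum>j\<in>UNIV. \<phi> R \<Omega> j) = \<Omega>"
proof -
  have nn: "\<forall>i. 0 \<le> \<phi> R \<Omega> i" and s: "(\<Sum>j\<in>UNIV. \<phi> R \<Omega> j) = \<Omega>"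
    using assms unfolding is_rule_def by auto
  then show "0 \<le> \<phi> R \<Omega> i" "(\<Sum>j\<in>UNIV. \<phi> R \<Omega> j) = \<Omega>" by auto
  have "\<phi> R \<Omega> i \<le> (\<Sum>j\<in>UNIV. \<phi> R \<Omega> j)"
    by (rule member_le_sum) (use nn in auto)
  then show "\<phi> R \<Omega> i \<le> \<Omega>" using s by simp
qed

lemma economy_upd: "economy R \<Omega> \<Longrightarrow> R' \<in> SP \<Longrightarrow> economy (R(i:=R')) \<Omega>"
  unfolding economy_def by auto

lemma sum_le_card_max:
  fixes f :: "'a::finite \<Rightarrow> real"
  assumes "\<And>j. f j \<le> f i"
  shows "sum f UNIV \<le> real CARD('a) * f i"
proof -
  have "sum f UNIV \<le> sum (\<lambda>_::'a. f i) UNIV" using sum_mono[of UNIV f "\<lambda>_::'a. f i"] assms by blast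
  then show ?thesis by simp
qed

lemma sum_ge_card_min:
  fixes f :: "'a::finite \<Rightarrow> real"
  assumes "\<And>j. f i \<le> f j"
  shows "real CARD('a) * f i \<le> sum f UNIV"
proof -
  have "sum (\<lambda>_::'a. f i) UNIV \<le> sum f UNIV" using sum_mono[of UNIV "\<lambda>_::'a. f i" f] assms by blast
  then show ?thesis by simp
qed

abbreviation Pinf :: pref where "Pinf \<equiv> pu (\<lambda>x. x)"
abbreviation Pzero :: pref where "Pzero \<equiv> pu (tent 1 1 0)"

lemma Pzero_SP: "Pzero \<in> SP" "peak Pzero = 0"
  using tent_SP[of 1 1 0] by (auto simp: zero_ereal_def)

lemma inf_report:
  fixes \<phi> :: "'a::finite rule"
  assumes "is_rule \<phi>" "peak_responsive \<phi>" "\<forall>j. R j \<in> SP" "0 < \<Omega>"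
  shows "\<Omega> / real CARD('a) \<le> \<phi> (R(i:=Pinf)) \<Omega> i"
proof -
  let ?R = "R(i:=Pinf)"
  have ec: "economy ?R \<Omega>" using assms id_SP unfolding economy_def by auto
  have "\<phi> ?R \<Omega> j \<le> \<phi> ?R \<Omega> i" for j
  proof (cases "j = i")
    case False
    then show ?thesis using assms(2) ec id_SP unfolding peak_responsive_def by auto
  qed simp
  then have "\<Omega> \<le> real CARD('a) * \<phi> ?R \<Omega> i"
    using sum_le_card_max[of "\<phi> ?R \<Omega>" i] rule_bounds(3)[OF assms(1) ec] by simp
  then show ?thesis by (simp add: divide_le_eq mult.commute)
qed

lemma zero_report:
  fixes \<phi> :: "'a::finite rule"
  assumes "is_rule \<phi>" "peak_responsive \<phi>" "\<forall>j. R j \<in> SP" "0 < \<Omega>"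
  shows "\<phi> (R(i:=Pzero)) \<Omega> i \<le> \<Omega> / real CARD('a)"
proof -
  let ?R = "R(i:=Pzero)"
  have ec: "economy ?R \<Omega>" using assms Pzero_SP unfolding economy_def by auto
  have "\<phi> ?R \<Omega> i \<le> \<phi> ?R \<Omega> j" for j
  proof (cases "j = i")
    case False
    then show ?thesis using assms(2) ec Pzero_SP SP_peak_nonneg assms(3)
      unfolding peak_responsive_def by auto
  qed simp
  then have "real CARD('a) * \<phi> ?R \<Omega> i \<le> \<Omega>"
    using sum_ge_card_min[of "\<phi> ?R \<Omega>" i] rule_bounds(3)[OF assms(1) ec] by simp
  then show ?thesis by (simp add: le_divide_eq mult.commute)
qed

lemma lowerA:
  fixes \<phi> :: "'a::finite rule"
  assumes rule: "is_rule \<phi>" and opo: "own_peak_only \<phi>" and pr: "peak_responsive \<phi>"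
    and nom: "NOM \<phi>" and ec: "economy R \<Omega>"
  shows "min (peak (R i)) (ereal (\<Omega> / real CARD('a))) \<le> ereal (\<phi> R \<Omega> i)"
proof (rule ccontr)
  define w where "w = \<Omega> / real CARD('a)"
  define x0 where "x0 = \<phi> R \<Omega> i"
  assume "\<not> min (peak (R i)) (ereal (\<Omega> / real CARD('a))) \<le> ereal (\<phi> R \<Omega> i)"
  then have lt1: "ereal x0 < peak (R i)" and lt2: "x0 < w"
    unfolding w_def x0_def by (auto simp: not_le)
  have Rall: "\<forall>j. R j \<in> SP" and Om: "0 < \<Omega>" using ec unfolding economy_def by auto
  have x0nn: "0 \<le> x0" and x0le: "x0 \<le> \<Omega>" using rule_bounds[OF rule ec] unfolding x0_def by auto
  obtain Ri where RiSP: "Ri \<in> SP" and pk: "peak Ri = peak (R i)"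
    and better: "\<And>y. w \<le> y \<Longrightarrow> y \<le> \<Omega> \<Longrightarrow> strict Ri (ereal y) (ereal x0)"
  proof (cases "peak (R i)")
    case (real p)
    define d where "d = (p - x0) / (2 * (\<Omega> + 1))"
    have px: "x0 < p" using lt1 real by simp
    have p0: "0 \<le> p" using SP_peak_nonneg[of "R i"] Rall real by simp
    have d0: "0 < d" unfolding d_def using px Om by simp
    have dO: "d * \<Omega> < p - x0"
    proof -
      have "d * \<Omega> = (p - x0) * (\<Omega> / (2 * (\<Omega> + 1)))" unfolding d_def by simp
      also have "\<dots> < (p - x0) * 1"
        using px Om by (intro mult_strict_left_mono) (auto simp: divide_less_eq)
      finally show ?thesis by simp
    qed
    show ?thesis
    proof (rule that[of "pu (tent 1 d p)"])
      show "pu (tent 1 d p) \<in> SP" "peak (pu (tent 1 d p)) = peak (R i)"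
        using tent_SP[of 1 d p] d0 p0 real by auto
      fix y assume y: "w \<le> y" "y \<le> \<Omega>"
      have y0: "0 \<le> y" using y lt2 x0nn by simp
      have "tent 1 d p (ereal x0) < tent 1 d p (ereal y)"
      proof (cases "y \<le> p")
        case True then show ?thesis using y lt2 px d0 by (simp add: tent_real)
      next
        case False
        have "d * (y - p) \<le> d * \<Omega>" using y p0 d0 by (intro mult_left_mono) auto
        then show ?thesis using False px d0 dO by (simp add: tent_real algebra_simps)
      qed
      then show "strict (pu (tent 1 d p)) (ereal y) (ereal x0)"
        using y0 x0nn by (simp add: pu_strict cspace_def)
    qed
  next
    case PInf
    show ?thesis
    proof (rule that[of "R i"])
      show "R i \<in> SP" "peak (R i) = peak (R i)" using Rall by auto
      fix y assume y: "w \<le> y" "y \<le> \<Omega>"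
      show "strict (R i) (ereal y) (ereal x0)"
        using SP_strict1[of "R i" x0 y] Rall PInf x0nn y lt2 by auto
    qed
  next
    case MInf
    then show ?thesis using SP_peak_nonneg[of "R i"] Rall by simp
  qed
  have opoeq: "\<phi> (R(i:=Ri)) \<Omega> i = x0"
    using opo ec RiSP pk unfolding own_peak_only_def x0_def by metis
  have bnd: "w \<le> \<phi> (R'(i:=Pinf)) \<Omega> i \<and> \<phi> (R'(i:=Pinf)) \<Omega> i \<le> \<Omega>" if "\<forall>j. R' j \<in> SP" for R'
  proof -
    have "economy (R'(i:=Pinf)) \<Omega>" using that Om id_SP unfolding economy_def by auto
    then show ?thesis using inf_report[OF rule pr that Om, of i] rule_bounds[OF rule] unfolding w_def by blast
  qed
  have "obvious_manipulation \<phi> i Ri Pinf \<Omega>"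
    unfolding obvious_manipulation_def manipulation_def
  proof (intro conjI ballI)
    show "\<exists>R'. (\<forall>j. R' j \<in> SP) \<and> strict Ri (ereal (\<phi> (R'(i := Pinf)) \<Omega> i)) (ereal (\<phi> (R'(i := Ri)) \<Omega> i))"
      using Rall bnd[OF Rall] better opoeq by metis
    fix x' assume "x' \<in> option_set \<phi> i Pinf \<Omega>"
    then obtain R' where R': "\<forall>j. R' j \<in> SP" "x' = \<phi> (R'(i:=Pinf)) \<Omega> i"
      unfolding option_set_def by auto
    have "x0 \<in> option_set \<phi> i Ri \<Omega>" unfolding option_set_def using Rall opoeq by auto
    then show "\<exists>x\<in>option_set \<phi> i Ri \<Omega>. strict Ri (ereal x') (ereal x)"
      using better bnd[OF R'(1)] R'(2) by blast
  qed
  then show False using nom RiSP id_SP Om unfolding NOM_def by blast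
qed

lemma upperA:
  fixes \<phi> :: "'a::finite rule"
  assumes rule: "is_rule \<phi>" and opo: "own_peak_only \<phi>" and pr: "peak_responsive \<phi>"
    and nom: "NOM \<phi>" and ec: "economy R \<Omega>"
  shows "ereal (\<phi> R \<Omega> i) \<le> max (peak (R i)) (ereal (\<Omega> / real CARD('a)))"
proof (rule ccontr)
  define w where "w = \<Omega> / real CARD('a)"
  define x0 where "x0 = \<phi> R \<Omega> i"
  assume "\<not> ereal (\<phi> R \<Omega> i) \<le> max (peak (R i)) (ereal (\<Omega> / real CARD('a)))"
  then have lt1: "peak (R i) < ereal x0" and lt2: "w < x0"
    unfolding w_def x0_def by (auto simp: not_le)
  have Rall: "\<forall>j. R j \<in> SP" and Om: "0 < \<Omega>" using ec unfolding economy_def by auto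
  have x0nn: "0 \<le> x0" and x0le: "x0 \<le> \<Omega>" using rule_bounds[OF rule ec] unfolding x0_def by auto
  have w0: "0 \<le> w" unfolding w_def using Om by simp
  obtain p where real: "peak (R i) = ereal p" using lt1 SP_peak_nonneg[of "R i"] Rall
    by (cases "peak (R i)") auto
  define d where "d = (x0 - p) / (2 * (p + 1))"
  have px: "p < x0" using lt1 real by simp
  have p0: "0 \<le> p" using SP_peak_nonneg[of "R i"] Rall real by simp
  have d0: "0 < d" unfolding d_def using px p0 by simp
  have dp: "d * p < x0 - p"
  proof -
    have "d * p = (x0 - p) * (p / (2 * (p + 1)))" unfolding d_def by simp
    also have "\<dots> < (x0 - p) * 1"
      using px p0 by (intro mult_strict_left_mono) (auto simp: divide_less_eq)
    finally show ?thesis by simp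
  qed
  define Ri where "Ri = pu (tent d 1 p)"
  have RiSP: "Ri \<in> SP" and pk: "peak Ri = peak (R i)"
    using tent_SP[of d 1 p] d0 p0 real unfolding Ri_def by auto
  have better: "strict Ri (ereal y) (ereal x0)" if y: "0 \<le> y" "y \<le> w" for y
  proof -
    have "tent d 1 p (ereal x0) < tent d 1 p (ereal y)"
    proof (cases "y \<le> p")
      case True
      have "d * (p - y) \<le> d * p" using y d0 by (intro mult_left_mono) auto
      then show ?thesis using True px d0 dp by (simp add: tent_real algebra_simps)
    next
      case False
      then show ?thesis using y lt2 px d0 by (simp add: tent_real)
    qed
    then show ?thesis
      using y x0nn unfolding Ri_def by (simp add: pu_strict cspace_def)
  qed
  have opoeq: "\<phi> (R(i:=Ri)) \<Omega> i = x0"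
    using opo ec RiSP pk unfolding own_peak_only_def x0_def by metis
  have bnd: "0 \<le> \<phi> (R'(i:=Pzero)) \<Omega> i \<and> \<phi> (R'(i:=Pzero)) \<Omega> i \<le> w" if "\<forall>j. R' j \<in> SP" for R'
  proof -
    have "economy (R'(i:=Pzero)) \<Omega>" using that Om Pzero_SP unfolding economy_def by auto
    then show ?thesis using zero_report[OF rule pr that Om, of i] rule_bounds[OF rule] unfolding w_def by blast
  qed
  have "obvious_manipulation \<phi> i Ri Pzero \<Omega>"
    unfolding obvious_manipulation_def manipulation_def
  proof (intro conjI ballI)
    show "\<exists>R'. (\<forall>j. R' j \<in> SP) \<and> strict Ri (ereal (\<phi> (R'(i := Pzero)) \<Omega> i)) (ereal (\<phi> (R'(i := Ri)) \<Omega> i))"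
      using Rall bnd[OF Rall] better opoeq by metis
    fix x' assume "x' \<in> option_set \<phi> i Pzero \<Omega>"
    then obtain R' where R': "\<forall>j. R' j \<in> SP" "x' = \<phi> (R'(i:=Pzero)) \<Omega> i"
      unfolding option_set_def by auto
    have "x0 \<in> option_set \<phi> i Ri \<Omega>" unfolding option_set_def using Rall opoeq by auto
    then show "\<exists>x\<in>option_set \<phi> i Ri \<Omega>. strict Ri (ereal x') (ereal x)"
      using better bnd[OF R'(1)] R'(2) by blast
  qed
  then show False using nom RiSP Pzero_SP Om unfolding NOM_def by blast
qed

lemma excess_ge: "0 \<le> excess R \<Omega> \<longleftrightarrow> ereal \<Omega> \<le> (\<Sum>j\<in>UNIV. peak (R j))"
  by (cases "\<Sum>j\<in>UNIV. peak (R j)") (auto simp: excess_def)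

lemma excess_le: "excess R \<Omega> \<le> 0 \<longleftrightarrow> (\<Sum>j\<in>UNIV. peak (R j)) \<le> ereal \<Omega>"
  by (cases "\<Sum>j\<in>UNIV. peak (R j)") (auto simp: excess_def)

lemma transfer_sum:
  fixes f :: "'a::finite \<Rightarrow> real"
  assumes "i \<noteq> j"
  shows "(\<Sum>k\<in>UNIV. f k + (if k = j then e else 0) - (if k = i then e else 0)) = sum f UNIV"
  by (simp add: sum.distrib sum_subtractf)

lemma effA:
  fixes \<phi> :: "'a::finite rule"
  assumes rule: "is_rule \<phi>" and eff: "efficient \<phi>" and ec: "economy R \<Omega>"
    and ex: "0 \<le> excess R \<Omega>"
  shows "ereal (\<phi> R \<Omega> i) \<le> peak (R i)"
proof (rule ccontr)
  let ?f = "\<phi> R \<Omega>"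
  assume "\<not> ereal (?f i) \<le> peak (R i)"
  then have lt: "peak (R i) < ereal (?f i)" by simp
  have Rall: "\<forall>j. R j \<in> SP" and Om: "0 < \<Omega>" using ec unfolding economy_def by auto
  have nn: "\<And>k. 0 \<le> ?f k" and sm: "sum ?f UNIV = \<Omega>" using rule_bounds[OF rule ec] by auto
  obtain p where p: "peak (R i) = ereal p" using lt SP_peak_nonneg[of "R i"] Rall
    by (cases "peak (R i)") auto
  have p0: "0 \<le> p" using SP_peak_nonneg[of "R i"] Rall p by simp
  have "\<exists>j. ereal (?f j) < peak (R j)"
  proof (rule ccontr)
    assume "\<not> ?thesis"
    then have le: "\<And>j. peak (R j) \<le> ereal (?f j)" by (simp add: not_less)
    define pr where "pr j = real_of_ereal (peak (R j))" for j
    have pe: "peak (R j) = ereal (pr j)" for j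
      using le[of j] SP_peak_nonneg[of "R j"] Rall unfolding pr_def by (cases "peak (R j)") auto
    have "sum pr UNIV < sum ?f UNIV"
      by (rule sum_strict_mono_ex1) (use le pe lt p in auto)
    moreover have "(\<Sum>j\<in>UNIV. peak (R j)) = ereal (sum pr UNIV)" by (simp add: pe)
    ultimately show False using ex sm by (simp add: excess_ge)
  qed
  then obtain j where j: "ereal (?f j) < peak (R j)" by blast
  have ij: "i \<noteq> j" using j lt by auto
  define d where "d = (case peak (R j) of ereal q \<Rightarrow> q - ?f j | _ \<Rightarrow> 1)"
  have d0: "0 < d" using j unfolding d_def by (cases "peak (R j)") auto
  define e where "e = min (?f i - p) d"
  have e0: "0 < e" unfolding e_def using d0 lt p by simp
  have ejp: "ereal (?f j + e) \<le> peak (R j)"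
  proof (cases "peak (R j)")
    case (real q) then show ?thesis unfolding e_def d_def by simp
  qed (use j in auto)
  define x where "x k = ?f k + (if k = j then e else 0) - (if k = i then e else 0)" for k
  have xi: "x i = ?f i - e" and xj: "x j = ?f j + e" using ij unfolding x_def by auto
  have xo: "k \<noteq> i \<Longrightarrow> k \<noteq> j \<Longrightarrow> x k = ?f k" for k unfolding x_def by auto
  have si: "strict (R i) (ereal (x i)) (ereal (?f i))"
    unfolding xi using SP_strict2[of "R i" "?f i - e" "?f i"] Rall e0 p p0
    by (simp add: e_def)
  have sj: "strict (R j) (ereal (x j)) (ereal (?f j))"
    unfolding xj using SP_strict1[of "R j" "?f j" "?f j + e"] Rall e0 nn ejp by simp
  have "\<exists>x :: 'a \<Rightarrow> real. (\<forall>i. 0 \<le> x i) \<and> (\<Sum>j\<in>UNIV. x j) = \<Omega> \<and>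
           (\<forall>i. R i (ereal (x i)) (ereal (?f i))) \<and> (\<exists>i. strict (R i) (ereal (x i)) (ereal (?f i)))"
  proof (rule exI[of _ x], intro conjI allI)
    fix k
    show "0 \<le> x k"
      using nn[of k] e0 p0 xi xj xo[of k] unfolding e_def by (cases "k = i"; cases "k = j") auto
    show "R k (ereal (x k)) (ereal (?f k))"
      using si sj strict_R SP_refl[of "R k" "ereal (?f k)"] Rall nn[of k] xo[of k]
      by (cases "k = i"; cases "k = j") auto
  next
    show "(\<Sum>j\<in>UNIV. x j) = \<Omega>" unfolding x_def using transfer_sum[OF ij] sm by simp
    show "\<exists>i. strict (R i) (ereal (x i)) (ereal (?f i))" using si by blast
  qed
  then show False using eff ec unfolding efficient_def by blast
qed

lemma peaks_finite:
  fixes R :: "'a::finite \<Rightarrow> pref"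
  assumes ec: "economy R \<Omega>" and ex: "excess R \<Omega> \<le> 0"
  shows "peak (R k) = ereal (real_of_ereal (peak (R k)))"
proof -
  have Rall: "\<forall>j. R j \<in> SP" using ec unfolding economy_def by auto
  have "(\<Sum>j\<in>UNIV. peak (R j)) = peak (R k) + (\<Sum>j\<in>UNIV - {k}. peak (R j))"
    by (simp add: sum.remove)
  moreover have "0 \<le> (\<Sum>j\<in>UNIV - {k}. peak (R j))"
    by (rule sum_nonneg) (use SP_peak_nonneg Rall in auto)
  ultimately have "peak (R k) \<le> (\<Sum>j\<in>UNIV. peak (R j))" by (simp add: ereal_le_add_self)
  also have "\<dots> \<le> ereal \<Omega>" using ex by (simp add: excess_le)
  finally show ?thesis using SP_peak_nonneg[of "R k"] Rall by (cases "peak (R k)") auto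
qed

lemma effB:
  fixes \<phi> :: "'a::finite rule"
  assumes rule: "is_rule \<phi>" and eff: "efficient \<phi>" and ec: "economy R \<Omega>"
    and ex: "excess R \<Omega> \<le> 0"
  shows "peak (R i) \<le> ereal (\<phi> R \<Omega> i)"
proof (rule ccontr)
  let ?f = "\<phi> R \<Omega>"
  define pr where "pr j = real_of_ereal (peak (R j))" for j
  have pe: "peak (R j) = ereal (pr j)" for j using peaks_finite[OF ec ex] unfolding pr_def by blast
  assume "\<not> peak (R i) \<le> ereal (?f i)"
  then have lt: "?f i < pr i" by (simp add: pe)
  have Rall: "\<forall>j. R j \<in> SP" and Om: "0 < \<Omega>" using ec unfolding economy_def by auto
  have nn: "\<And>k. 0 \<le> ?f k" and sm: "sum ?f UNIV = \<Omega>" using rule_bounds[OF rule ec] by auto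
  have p0: "0 \<le> pr k" for k using SP_peak_nonneg[of "R k"] Rall pe[of k] by simp
  have "\<exists>j. pr j < ?f j"
  proof (rule ccontr)
    assume "\<not> ?thesis"
    then have le: "\<And>j. ?f j \<le> pr j" by (simp add: not_less)
    have "sum ?f UNIV < sum pr UNIV"
      by (rule sum_strict_mono_ex1) (use le lt in auto)
    moreover have "(\<Sum>j\<in>UNIV. peak (R j)) = ereal (sum pr UNIV)" by (simp add: pe)
    ultimately show False using ex sm by (simp add: excess_le)
  qed
  then obtain j where j: "pr j < ?f j" by blast
  have ij: "i \<noteq> j" using j lt by auto
  define e where "e = min (pr i - ?f i) (?f j - pr j)"
  have e0: "0 < e" unfolding e_def using j lt by simp
  define x where "x k = ?f k + (if k = i then e else 0) - (if k = j then e else 0)" for k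
  have xi: "x i = ?f i + e" and xj: "x j = ?f j - e" using ij unfolding x_def by auto
  have xo: "k \<noteq> i \<Longrightarrow> k \<noteq> j \<Longrightarrow> x k = ?f k" for k unfolding x_def by auto
  have si: "strict (R i) (ereal (x i)) (ereal (?f i))"
    unfolding xi using SP_strict1[of "R i" "?f i" "?f i + e"] Rall e0 nn pe[of i]
    by (simp add: e_def)
  have sj: "strict (R j) (ereal (x j)) (ereal (?f j))"
    unfolding xj using SP_strict2[of "R j" "?f j - e" "?f j"] Rall e0 p0[of j] pe[of j]
    by (simp add: e_def)
  have "\<exists>x :: 'a \<Rightarrow> real. (\<forall>i. 0 \<le> x i) \<and> (\<Sum>j\<in>UNIV. x j) = \<Omega> \<and>
           (\<forall>i. R i (ereal (x i)) (ereal (?f i))) \<and> (\<exists>i. strict (R i) (ereal (x i)) (ereal (?f i)))"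
  proof (rule exI[of _ x], intro conjI allI)
    fix k
    show "0 \<le> x k"
      using nn[of k] e0 p0[of j] xi xj xo[of k] unfolding e_def by (cases "k = i"; cases "k = j") auto
    show "R k (ereal (x k)) (ereal (?f k))"
      using si sj strict_R SP_refl[of "R k" "ereal (?f k)"] Rall nn[of k] xo[of k]
      by (cases "k = i"; cases "k = j") auto
  next
    show "(\<Sum>j\<in>UNIV. x j) = \<Omega>" unfolding x_def using transfer_sum[OF ij[symmetric]] sm by simp
    show "\<exists>i. strict (R i) (ereal (x i)) (ereal (?f i))" using si by blast
  qed
  then show False using eff ec unfolding efficient_def by blast
qed

lemma sum_split_P:
  fixes f :: "'a::finite \<Rightarrow> real"
  shows "sum f {j. P j} + sum f {j. \<not> P j} = sum f UNIV"
proof -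
  have "UNIV = {j. P j} \<union> {j. \<not> P j}" by auto
  then have "sum f UNIV = sum f ({j. P j} \<union> {j. \<not> P j})" by simp
  also have "\<dots> = sum f {j. P j} + sum f {j. \<not> P j}"
    by (rule sum.union_disjoint) auto
  finally show ?thesis by simp
qed

lemma fwd_simple:
  fixes \<phi> :: "'a::finite rule"
  assumes rule: "is_rule \<phi>" and opo: "own_peak_only \<phi>" and eff: "efficient \<phi>"
    and pr: "peak_responsive \<phi>" and nom: "NOM \<phi>"
  shows "simple_rule \<phi>"
  unfolding simple_rule_def
proof (intro conjI allI impI opo)
  fix R :: "'a \<Rightarrow> pref" and \<Omega> :: real assume ec: "economy R \<Omega>"
  define w where "w = \<Omega> / real CARD('a)"
  let ?f = "\<phi> R \<Omega>"
  let ?S = "simple_agent R \<Omega>"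
  define \<nu> where "\<nu> j = \<bar>?f j - w\<bar>" for j
  have Rall: "\<forall>j. R j \<in> SP" and Om: "0 < \<Omega>" using ec unfolding economy_def by auto
  have lo: "min (peak (R j)) (ereal w) \<le> ereal (?f j)" for j
    using lowerA[OF rule opo pr nom ec] unfolding w_def by blast
  have up: "ereal (?f j) \<le> max (peak (R j)) (ereal w)" for j
    using upperA[OF rule opo pr nom ec] unfolding w_def by blast
  have eA: "0 \<le> excess R \<Omega> \<Longrightarrow> ereal (?f j) \<le> peak (R j)" for j
    using effA[OF rule eff ec] by blast
  have eB: "excess R \<Omega> \<le> 0 \<Longrightarrow> peak (R j) \<le> ereal (?f j)" for j
    using effB[OF rule eff ec] by blast
  have sa: "?S j \<longleftrightarrow> (0 \<le> excess R \<Omega> \<and> peak (R j) < ereal w) \<or> (excess R \<Omega> \<le> 0 \<and> peak (R j) > ereal w)" for j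
    unfolding simple_agent_def w_def by simp
  have c1: "ereal (?f j) = peak (R j)" if "?S j" for j
  proof -
    from that consider "0 \<le> excess R \<Omega>" "peak (R j) < ereal w" | "excess R \<Omega> \<le> 0" "peak (R j) > ereal w"
      using sa by blast
    then show ?thesis
    proof cases
      case 1
      then have "min (peak (R j)) (ereal w) = peak (R j)" by (simp add: min_absorb1 less_imp_le)
      then show ?thesis using 1 lo[of j] eA[of j] by (metis antisym)
    next
      case 2
      then have "max (peak (R j)) (ereal w) = peak (R j)" by (simp add: max_absorb1 less_imp_le)
      then show ?thesis using 2 up[of j] eB[of j] by (metis antisym)
    qed
  qed
  have c2: "w \<le> ?f j \<and> ereal (?f j) \<le> peak (R j)" if "\<not> ?S j" "0 \<le> excess R \<Omega>" for j
  proof -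
    have "ereal w \<le> peak (R j)" using that sa[of j] by auto
    then have "min (peak (R j)) (ereal w) = ereal w" by (simp add: min_absorb2)
    then show ?thesis using lo[of j] eA[of j] that by auto
  qed
  have c3: "?f j \<le> w \<and> peak (R j) \<le> ereal (?f j)" if "\<not> ?S j" "excess R \<Omega> \<le> 0" for j
  proof -
    have "peak (R j) \<le> ereal w" using that sa[of j] by auto
    then have "max (peak (R j)) (ereal w) = ereal w" by (simp add: max_absorb2)
    then show ?thesis using up[of j] eB[of j] that by auto
  qed
  have zz: "0 \<le> excess R \<Omega> \<or> excess R \<Omega> \<le> 0" by auto
  show "\<exists>\<nu> :: 'a \<Rightarrow> real.
        (\<forall>i. ?S i \<longrightarrow> ereal (?f i) = peak (R i)) \<and>
        (excess R \<Omega> \<ge> 0 \<longrightarrow> (\<forall>i. \<not> ?S i \<longrightarrow> ?f i = \<Omega> / real CARD('a) + \<nu> i)) \<and>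
        (excess R \<Omega> \<le> 0 \<longrightarrow> (\<forall>i. \<not> ?S i \<longrightarrow> ?f i = \<Omega> / real CARD('a) - \<nu> i)) \<and>
        (\<forall>i. \<not> ?S i \<longrightarrow> 0 \<le> \<nu> i \<and> ereal (\<nu> i) \<le> \<bar>peak (R i) - ereal (\<Omega> / real CARD('a))\<bar>) \<and>
        ereal (\<Sum>j\<in>{j. \<not> ?S j}. \<nu> j) = E_val R \<Omega>"
  proof (rule exI[of _ \<nu>], intro conjI allI impI)
    fix i
    show "?S i \<Longrightarrow> ereal (?f i) = peak (R i)" using c1 by blast
    show "0 \<le> excess R \<Omega> \<Longrightarrow> \<not> ?S i \<Longrightarrow> ?f i = \<Omega> / real CARD('a) + \<nu> i"
      using c2[of i] unfolding \<nu>_def w_def by auto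
    show "excess R \<Omega> \<le> 0 \<Longrightarrow> \<not> ?S i \<Longrightarrow> ?f i = \<Omega> / real CARD('a) - \<nu> i"
      using c3[of i] unfolding \<nu>_def w_def by auto
    show "\<not> ?S i \<Longrightarrow> 0 \<le> \<nu> i" unfolding \<nu>_def by simp
    assume ns: "\<not> ?S i"
    show "ereal (\<nu> i) \<le> \<bar>peak (R i) - ereal (\<Omega> / real CARD('a))\<bar>"
    proof (cases "0 \<le> excess R \<Omega>")
      case True
      then show ?thesis using c2[OF ns True] unfolding \<nu>_def w_def[symmetric]
        by (cases "peak (R i)") auto
    next
      case False
      then have "excess R \<Omega> \<le> 0" by auto
      then show ?thesis using c3[OF ns] unfolding \<nu>_def w_def[symmetric]
        by (cases "peak (R i)") auto
    qed
  next
    have ps: "(\<Sum>j\<in>{j. ?S j}. peak (R j)) = ereal (\<Sum>j\<in>{j. ?S j}. ?f j)"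
    proof -
      have "(\<Sum>j\<in>{j. ?S j}. peak (R j)) = (\<Sum>j\<in>{j. ?S j}. ereal (?f j))"
        by (rule sum.cong) (use c1 in auto)
      then show ?thesis by simp
    qed
    define A where "A = (\<Sum>j\<in>{j. ?S j}. ?f j)"
    define B where "B = (\<Sum>j\<in>{j. \<not> ?S j}. ?f j)"
    have om: "\<Omega> = A + B"
      using sum_split_P[of ?f ?S] rule_bounds(3)[OF rule ec] unfolding A_def B_def by simp
    have sb: "(\<Sum>j\<in>{j. \<not> ?S j}. ?f j - w) = B - real (card {j. \<not> ?S j}) * w"
      unfolding B_def by (simp add: sum_subtractf)
    have E: "E_val R \<Omega> = ereal \<bar>\<Sum>j\<in>{j. \<not> ?S j}. ?f j - w\<bar>"
    proof -
      have "E_val R \<Omega> = \<bar>ereal \<Omega> - (ereal A + ereal (real (card {j. \<not> ?S j}) * w))\<bar>"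
        unfolding E_val_def ps w_def[symmetric] A_def by simp
      also have "\<dots> = ereal \<bar>\<Omega> - A - real (card {j. \<not> ?S j}) * w\<bar>" by simp
      also have "\<Omega> - A - real (card {j. \<not> ?S j}) * w = B - real (card {j. \<not> ?S j}) * w"
        using om by linarith
      finally show ?thesis unfolding sb .
    qed
    show "ereal (\<Sum>j\<in>{j. \<not> ?S j}. \<nu> j) = E_val R \<Omega>"
    proof (cases "0 \<le> excess R \<Omega>")
      case True
      have "(\<Sum>j\<in>{j. \<not> ?S j}. \<nu> j) = (\<Sum>j\<in>{j. \<not> ?S j}. ?f j - w)"
        by (rule sum.cong) (use c2 True in \<open>auto simp: \<nu>_def\<close>)
      moreover have "0 \<le> (\<Sum>j\<in>{j. \<not> ?S j}. ?f j - w)"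
        by (rule sum_nonneg) (use c2 True in auto)
      ultimately show ?thesis using E by simp
    next
      case False
      then have F: "excess R \<Omega> \<le> 0" by auto
      have "(\<Sum>j\<in>{j. \<not> ?S j}. \<nu> j) = (\<Sum>j\<in>{j. \<not> ?S j}. w - ?f j)"
        by (rule sum.cong) (use c3 F in \<open>auto simp: \<nu>_def\<close>)
      moreover have "(\<Sum>j\<in>{j. \<not> ?S j}. ?f j - w) \<le> 0"
        by (rule sum_nonpos) (use c3 F in auto)
      moreover have "(\<Sum>j\<in>{j. \<not> ?S j}. w - ?f j) = - (\<Sum>j\<in>{j. \<not> ?S j}. ?f j - w)"
        by (simp add: sum_negf[symmetric])
      ultimately show ?thesis using E by simp
    qed
  qed
qed

lemma simple_props:
  fixes \<phi> :: "'a::finite rule"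
  assumes rule: "is_rule \<phi>" and sr: "simple_rule \<phi>" and ec: "economy R \<Omega>"
  shows "0 \<le> excess R \<Omega> \<Longrightarrow> ereal (\<phi> R \<Omega> i) \<le> peak (R i)"
    and "excess R \<Omega> \<le> 0 \<Longrightarrow> peak (R i) \<le> ereal (\<phi> R \<Omega> i)"
    and "R i (ereal (\<phi> R \<Omega> i)) (ereal (\<Omega> / real CARD('a)))"
proof -
  define w where "w = \<Omega> / real CARD('a)"
  let ?f = "\<phi> R \<Omega>"
  let ?S = "simple_agent R \<Omega>"
  have Rall: "\<forall>j. R j \<in> SP" and Om: "0 < \<Omega>" using ec unfolding economy_def by auto
  have w0: "0 \<le> w" unfolding w_def using Om by simp
  have nn: "0 \<le> ?f i" using rule_bounds[OF rule ec] by auto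
  have "\<exists>\<nu> :: 'a \<Rightarrow> real.
        (\<forall>i. ?S i \<longrightarrow> ereal (?f i) = peak (R i)) \<and>
        (excess R \<Omega> \<ge> 0 \<longrightarrow> (\<forall>i. \<not> ?S i \<longrightarrow> ?f i = \<Omega> / real CARD('a) + \<nu> i)) \<and>
        (excess R \<Omega> \<le> 0 \<longrightarrow> (\<forall>i. \<not> ?S i \<longrightarrow> ?f i = \<Omega> / real CARD('a) - \<nu> i)) \<and>
        (\<forall>i. \<not> ?S i \<longrightarrow> 0 \<le> \<nu> i \<and> ereal (\<nu> i) \<le> \<bar>peak (R i) - ereal (\<Omega> / real CARD('a))\<bar>) \<and>
        ereal (\<Sum>j\<in>{j. \<not> ?S j}. \<nu> j) = E_val R \<Omega>"
    using sr ec unfolding simple_rule_def by (elim conjE allE impE)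
  then obtain \<nu> where
    H1: "\<forall>i. ?S i \<longrightarrow> ereal (?f i) = peak (R i)" and
    H2: "excess R \<Omega> \<ge> 0 \<longrightarrow> (\<forall>i. \<not> ?S i \<longrightarrow> ?f i = \<Omega> / real CARD('a) + \<nu> i)" and
    H3: "excess R \<Omega> \<le> 0 \<longrightarrow> (\<forall>i. \<not> ?S i \<longrightarrow> ?f i = \<Omega> / real CARD('a) - \<nu> i)" and
    H4: "\<forall>i. \<not> ?S i \<longrightarrow> 0 \<le> \<nu> i \<and> ereal (\<nu> i) \<le> \<bar>peak (R i) - ereal (\<Omega> / real CARD('a))\<bar>"
    by (elim exE conjE)
  have h1: "\<And>i. ?S i \<Longrightarrow> ereal (?f i) = peak (R i)" using H1 by blast
  have h2: "\<And>i. excess R \<Omega> \<ge> 0 \<Longrightarrow> \<not> ?S i \<Longrightarrow> ?f i = w + \<nu> i"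
    using H2 unfolding w_def by blast
  have h3: "\<And>i. excess R \<Omega> \<le> 0 \<Longrightarrow> \<not> ?S i \<Longrightarrow> ?f i = w - \<nu> i"
    using H3 unfolding w_def by blast
  have h4: "\<And>i. \<not> ?S i \<Longrightarrow> 0 \<le> \<nu> i \<and> ereal (\<nu> i) \<le> \<bar>peak (R i) - ereal w\<bar>"
    using H4 unfolding w_def by blast
  have sa: "?S j \<longleftrightarrow> (0 \<le> excess R \<Omega> \<and> peak (R j) < ereal w) \<or> (excess R \<Omega> \<le> 0 \<and> peak (R j) > ereal w)" for j
    unfolding simple_agent_def w_def by simp
  have A: "w \<le> ?f i \<and> ereal (?f i) \<le> peak (R i)" if z: "0 \<le> excess R \<Omega>" and ns: "\<not> ?S i"
  proof -
    have pw: "ereal w \<le> peak (R i)" using z ns sa[of i] by auto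
    have f: "?f i = w + \<nu> i" and n0: "0 \<le> \<nu> i" and nl: "ereal (\<nu> i) \<le> \<bar>peak (R i) - ereal w\<bar>"
      using h2[OF z ns] h4[OF ns] by auto
    show ?thesis
    proof (cases "peak (R i)")
      case (real q)
      have wq: "w \<le> q" using pw real by simp
      have "\<nu> i \<le> \<bar>q - w\<bar>" using nl real by simp
      then have "\<nu> i \<le> q - w" using wq by simp
      then show ?thesis using f n0 real by simp
    next
      case PInf then show ?thesis using f n0 by simp
    next
      case MInf then show ?thesis using pw by simp
    qed
  qed
  have B: "?f i \<le> w \<and> peak (R i) \<le> ereal (?f i)" if z: "excess R \<Omega> \<le> 0" and ns: "\<not> ?S i"
  proof -
    have pw: "peak (R i) \<le> ereal w" using z ns sa[of i] by auto
    have f: "?f i = w - \<nu> i" and n0: "0 \<le> \<nu> i" and nl: "ereal (\<nu> i) \<le> \<bar>peak (R i) - ereal w\<bar>"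
      using h3[OF z ns] h4[OF ns] by auto
    show ?thesis
    proof (cases "peak (R i)")
      case (real q)
      have wq: "q \<le> w" using pw real by simp
      have "\<nu> i \<le> \<bar>q - w\<bar>" using nl real by simp
      then have "\<nu> i \<le> w - q" using wq by simp
      then show ?thesis using f n0 real by simp
    next
      case PInf then show ?thesis using pw by simp
    next
      case MInf then show ?thesis using SP_peak_nonneg[of "R i"] Rall by simp
    qed
  qed
  show "0 \<le> excess R \<Omega> \<Longrightarrow> ereal (?f i) \<le> peak (R i)"
    using A h1 by (cases "?S i") auto
  show "excess R \<Omega> \<le> 0 \<Longrightarrow> peak (R i) \<le> ereal (?f i)"
    using B h1 by (cases "?S i") auto
  have "R i (ereal (?f i)) (ereal w)"
  proof (cases "?S i")
    case True
    then show ?thesis using h1 SP_peak_in(2)[of "R i" "ereal w"] Rall w0 by (simp add: cspace_def)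
  next
    case False
    show ?thesis
    proof (cases "?f i = w")
      case True then show ?thesis using SP_refl[of "R i" "ereal w"] Rall w0 by simp
    next
      case ne: False
      show ?thesis
      proof (cases "0 \<le> excess R \<Omega>")
        case True
        then show ?thesis using A[OF True False] ne SP_strict1[of "R i" w "?f i"] Rall w0 strict_R by force
      next
        case z: False
        then have z0: "excess R \<Omega> \<le> 0" by auto
        show ?thesis using B[OF z0 False] ne SP_strict2[of "R i" "?f i" w] Rall nn strict_R by force
      qed
    qed
  qed
  then show "R i (ereal (?f i)) (ereal (\<Omega> / real CARD('a)))" unfolding w_def .
qed

lemma simple_efficient:
  fixes \<phi> :: "'a::finite rule"
  assumes rule: "is_rule \<phi>" and sr: "simple_rule \<phi>"
  shows "efficient \<phi>"
  unfolding efficient_def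
proof (intro allI impI notI)
  fix R :: "'a \<Rightarrow> pref" and \<Omega> :: real
  assume ec: "economy R \<Omega>"
  let ?f = "\<phi> R \<Omega>"
  assume "\<exists>x :: 'a \<Rightarrow> real. (\<forall>i. 0 \<le> x i) \<and> (\<Sum>j\<in>UNIV. x j) = \<Omega> \<and>
           (\<forall>i. R i (ereal (x i)) (ereal (?f i))) \<and> (\<exists>i. strict (R i) (ereal (x i)) (ereal (?f i)))"
  then obtain x :: "'a \<Rightarrow> real" where x0: "\<And>i. 0 \<le> x i" and xs: "sum x UNIV = \<Omega>"
    and xR: "\<And>i. R i (ereal (x i)) (ereal (?f i))" and i0: "\<exists>i0. strict (R i0) (ereal (x i0)) (ereal (?f i0))"
    by (elim exE conjE) auto
  have Rall: "\<forall>j. R j \<in> SP" using ec unfolding economy_def by auto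
  have nn: "\<And>k. 0 \<le> ?f k" and sm: "sum ?f UNIV = \<Omega>" using rule_bounds[OF rule ec] by auto
  have eq: "x = ?f"
  proof (cases "0 \<le> excess R \<Omega>")
    case True
    have ge: "?f k \<le> x k" for k
    proof (rule ccontr)
      assume "\<not> ?thesis"
      then have "x k < ?f k" by simp
      then have "strict (R k) (ereal (?f k)) (ereal (x k))"
        using SP_strict1[of "R k" "x k" "?f k"] Rall x0 simple_props(1)[OF rule sr ec True] by auto
      then show False using xR[of k] unfolding strict_def by auto
    qed
    show ?thesis
    proof (rule ccontr)
      assume "x \<noteq> ?f"
      then obtain k where "x k \<noteq> ?f k" by auto
      then have "?f k < x k" using ge[of k] by simp
      then have "sum ?f UNIV < sum x UNIV" by (intro sum_strict_mono_ex1) (use ge in auto)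
      then show False using sm xs by simp
    qed
  next
    case False
    then have z: "excess R \<Omega> \<le> 0" by auto
    have le: "x k \<le> ?f k" for k
    proof (rule ccontr)
      assume "\<not> ?thesis"
      then have "?f k < x k" by simp
      then have "strict (R k) (ereal (?f k)) (ereal (x k))"
        using SP_strict2[of "R k" "?f k" "x k"] Rall nn simple_props(2)[OF rule sr ec z] by auto
      then show False using xR[of k] unfolding strict_def by auto
    qed
    show ?thesis
    proof (rule ccontr)
      assume "x \<noteq> ?f"
      then obtain k where "x k \<noteq> ?f k" by auto
      then have "x k < ?f k" using le[of k] by simp
      then have "sum x UNIV < sum ?f UNIV" by (intro sum_strict_mono_ex1) (use le in auto)
      then show False using sm xs by simp
    qed
  qed
  obtain i0 where "strict (R i0) (ereal (x i0)) (ereal (?f i0))" using i0 by blast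
  then show False using eq strict_irrefl by metis
qed

lemma simple_NOM:
  fixes \<phi> :: "'a::finite rule"
  assumes rule: "is_rule \<phi>" and sr: "simple_rule \<phi>" and pr: "peak_responsive \<phi>"
  shows "NOM \<phi>"
  unfolding NOM_def
proof (intro allI impI notI)
  fix i :: 'a and Ri Ri' :: pref and \<Omega> :: real
  assume Ri: "Ri \<in> SP" and Ri': "Ri' \<in> SP" and Om: "0 < \<Omega>"
  assume om: "obvious_manipulation \<phi> i Ri Ri' \<Omega>"
  define w where "w = \<Omega> / real CARD('a)"
  let ?R = "(\<lambda>_::'a. Ri')"
  have ec: "economy ?R \<Omega>" using Ri' Om unfolding economy_def by auto
  have eqs: "\<phi> ?R \<Omega> j = \<phi> ?R \<Omega> i" for j
  proof (cases "j = i")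
    case False
    have p: "\<forall>R \<Omega> i j. economy R \<Omega> \<longrightarrow> i \<noteq> j \<longrightarrow> peak (R i) \<le> peak (R j) \<longrightarrow> \<phi> R \<Omega> i \<le> \<phi> R \<Omega> j"
      using pr unfolding peak_responsive_def by blast
    have "\<phi> ?R \<Omega> j \<le> \<phi> ?R \<Omega> i" using p[rule_format, OF ec False] by simp
    moreover have "\<phi> ?R \<Omega> i \<le> \<phi> ?R \<Omega> j" using p[rule_format, OF ec, of i j] False by simp
    ultimately show ?thesis by simp
  qed simp
  have "sum (\<phi> ?R \<Omega>) UNIV = sum (\<lambda>_::'a. \<phi> ?R \<Omega> i) UNIV"
    using eqs by (intro sum.cong) auto
  then have "sum (\<phi> ?R \<Omega>) UNIV = real CARD('a) * \<phi> ?R \<Omega> i" by simp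
  then have "\<Omega> = real CARD('a) * \<phi> ?R \<Omega> i" using rule_bounds(3)[OF rule ec] by simp
  then have wv: "\<phi> ?R \<Omega> i = w" unfolding w_def by (simp add: eq_divide_eq mult.commute)
  have "w \<in> option_set \<phi> i Ri' \<Omega>"
  proof -
    have "?R(i:=Ri') = ?R" by auto
    then have "w = \<phi> (?R(i:=Ri')) \<Omega> i \<and> (\<forall>j. ?R j \<in> SP)" using wv Ri' by simp
    then show ?thesis unfolding option_set_def by blast
  qed
  then obtain x where x: "x \<in> option_set \<phi> i Ri \<Omega>" and st: "strict Ri (ereal w) (ereal x)"
    using om unfolding obvious_manipulation_def by blast
  from x obtain R' where R': "\<forall>j. R' j \<in> SP" and xv: "x = \<phi> (R'(i:=Ri)) \<Omega> i"
    unfolding option_set_def by auto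
  have ec': "economy (R'(i:=Ri)) \<Omega>" using R' Ri Om unfolding economy_def by auto
  have "(R'(i:=Ri)) i (ereal x) (ereal w)"
    using simple_props(3)[OF rule sr ec', of i] xv unfolding w_def by simp
  then show False using st unfolding strict_def by simp
qed

theorem proposition4:
  fixes \<phi> :: "'a::finite rule"
  assumes "is_rule \<phi>"
  shows "(own_peak_only \<phi> \<and> efficient \<phi> \<and> peak_responsive \<phi> \<and> NOM \<phi>) \<longleftrightarrow>
         (simple_rule \<phi> \<and> peak_responsive \<phi>)"
proof
  assume "own_peak_only \<phi> \<and> efficient \<phi> \<and> peak_responsive \<phi> \<and> NOM \<phi>"
  then show "simple_rule \<phi> \<and> peak_responsive \<phi>"
    using fwd_simple[OF assms] by blast
next
  assume h: "simple_rule \<phi> \<and> peak_responsive \<phi>"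
  then have "own_peak_only \<phi>" unfolding simple_rule_def by blast
  then show "own_peak_only \<phi> \<and> efficient \<phi> \<and> peak_responsive \<phi> \<and> NOM \<phi>"
    using h simple_efficient[OF assms] simple_NOM[OF assms] by blast
qed

end
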